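(* Let $\sigma, \tau \in \mathrm{Perm}(S)$. Set $S' = S \setminus \mathrm{supp}(\tau)$. Let $\pi' \in \mathrm{Perm}(S')$, and let $\pi$ be the permutation with $\pi|_{\mathrm{supp}(\tau)} = \tau$ and $\pi|_{S'} = \pi'$. Let $\mathbf{Z} \in M_N(\mathbb{C})^S$. If $S' = \varnothing$, then $\prod_{\gamma \in \mathrm{Cyc}(\pi \sigma)} \mathrm{tr}_N(\prod_{k \in \gamma} Z_k) = \prod_{\gamma \in \mathrm{Cyc}(\tau \sigma)} \mathrm{tr}_N(\prod_{k \in \gamma} Z_k) = \lambda_{\sigma,\tau}$. Otherwise, we have \[ \prod_{\gamma \in \mathrm{Cyc}(\pi \sigma)} \mathrm{tr}_N \left( \prod_{k \in \gamma} Z_k \right) = \prod_{\gamma \in \mathrm{Cyc}(\pi'(\sigma \ominus \tau))} \mathrm{tr}_N \left( \prod_{k \in \gamma} Z_k^{\tau,\sigma} \right). \]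
   Context: $S \subseteq \mathbb{N}$ is a finite set, $\mathrm{Perm}(S)$ the permutations of $S$, $\mathrm{supp}(\sigma)=\{k: \sigma(k)\neq k\}$, and $\mathrm{Cyc}(\sigma)$ the set of cycles of $\sigma$ (nontrivial cycles together with fixed points, each fixed point viewed as a trivial cycle). $M_N(\mathbb{C})$ is the algebra of $N\times N$ complex matrices and $\mathrm{tr}_N = \frac1N \mathrm{Tr}$. For a cycle $\gamma$ written as $(k_1 \dots k_m)$ with $k_1 = \min \mathrm{supp}(\gamma)$, $\prod_{k \in \gamma} x_k := x_{k_1}\cdots x_{k_m}$; for a fixed point $j$, $\prod_{k\in\gamma} x_k := x_j$. For $\sigma,\tau \in \mathrm{Perm}(S)$, $\sigma \ominus \tau \in \mathrm{Perm}(S \setminus \mathrm{supp}(\tau))$ is defined by $(\sigma\ominus\tau)(k) = (\tau\sigma)^{r(k)}(k)$, where $r(k)\ge 1$ is the smallest index with $(\tau\sigma)^{r(k)}(k) \notin \mathrm{supp}(\tau)$. The $(\sigma,\tau)$-reduction $\mathbf{Z}^{\sigma,\tau} \in M_N(\mathbb{C})^{S\setminus \mathrm{supp}(\tau)}$ of $\mathbf{Z} = (Z_k)_{k\in S}$ (written $Z_k^{\tau,\sigma}$ in the claim): for $j \in S \setminus \mathrm{supp}(\tau)$, with $r(j)\ge1$ the first index such that $(\tau\sigma)^{r(j)}(j)\notin \mathrm{supp}(\tau)$, set $Z_j^{\sigma,\tau} = Z_j Z_{(\tau\sigma)(j)} \cdots Z_{(\tau\sigma)^{r(j)-1}(j)}$.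 Let the scalar $\lambda_{\sigma,\tau} = \prod_{\gamma \in \mathrm{Cyc}(\tau\sigma),\ \mathrm{supp}(\gamma)\subseteq \mathrm{supp}(\tau)} \mathrm{tr}_N(\prod_{k\in\gamma} Z_k)$ (the product over cycles of $\tau\sigma$, possibly fixed points, contained in $\mathrm{supp}(\tau)$); then the value of $Z^{\sigma,\tau}_m$ for $m = \min(S\setminus\mathrm{supp}(\tau))$ is additionally multiplied by $\lambda_{\sigma,\tau}$. If $\mathrm{supp}(\tau) = S$, all cycles of $\tau\sigma$ contribute to $\lambda_{\sigma,\tau}$. *)

theory Defs
  imports "HOL-Analysis.Analysis" "HOL-Combinatorics.Permutations"
begin

text \<open>Permutations of a finite S (subset of nat) are functions f with f permutes S.
  Composition tau sigma means tau o sigma (sigma applied first).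
  Matrices in M_N(C) are complex^'n^'n with N = CARD('n).\<close>

definition psupp :: "(nat \<Rightarrow> nat) \<Rightarrow> nat set" where
  "psupp f = {k. f k \<noteq> k}"

definition cyc_of :: "(nat \<Rightarrow> nat) \<Rightarrow> nat \<Rightarrow> nat set" where
  "cyc_of p k = {(p ^^ i) k | i. True}"

text \<open>Cyc(p) for p a permutation of S: all cycles including fixed points.\<close>
definition Cyc :: "(nat \<Rightarrow> nat) \<Rightarrow> nat set \<Rightarrow> nat set set" where
  "Cyc p S = cyc_of p ` S"

definition cyc_word :: "(nat \<Rightarrow> nat) \<Rightarrow> nat set \<Rightarrow> nat list" where
  "cyc_word p C = map (\<lambda>i. (p ^^ i) (Min C)) [0..<card C]"

definition mprod_list :: "('a::comm_ring_1^'n^'n) list \<Rightarrow> 'a^'n^'n" where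
  "mprod_list xs = foldr (\<lambda>A B. A ** B) xs (mat 1)"

definition trN :: "complex^'n^'n \<Rightarrow> complex" where
  "trN A = trace A / of_nat CARD('n)"

definition cyc_tr :: "(nat \<Rightarrow> nat) \<Rightarrow> (nat \<Rightarrow> complex^'n^'n) \<Rightarrow> nat set \<Rightarrow> complex" where
  "cyc_tr p Z C = trN (mprod_list (map Z (cyc_word p C)))"

definition cyc_trace_prod :: "(nat \<Rightarrow> nat) \<Rightarrow> nat set \<Rightarrow> (nat \<Rightarrow> complex^'n^'n) \<Rightarrow> complex" where
  "cyc_trace_prod p S Z = (\<Prod>C\<in>Cyc p S. cyc_tr p Z C)"

definition ret :: "(nat \<Rightarrow> nat) \<Rightarrow> (nat \<Rightarrow> nat) \<Rightarrow> nat \<Rightarrow> nat" where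
  "ret \<sigma> \<tau> k = (LEAST r. 1 \<le> r \<and> ((\<tau> \<circ> \<sigma>) ^^ r) k \<notin> psupp \<tau>)"

definition pominus :: "(nat \<Rightarrow> nat) \<Rightarrow> (nat \<Rightarrow> nat) \<Rightarrow> nat \<Rightarrow> nat" where
  "pominus \<sigma> \<tau> k = (if k \<in> psupp \<tau> then k else ((\<tau> \<circ> \<sigma>) ^^ ret \<sigma> \<tau> k) k)"

definition lam :: "nat set \<Rightarrow> (nat \<Rightarrow> nat) \<Rightarrow> (nat \<Rightarrow> nat) \<Rightarrow> (nat \<Rightarrow> complex^'n^'n) \<Rightarrow> complex" where
  "lam S \<sigma> \<tau> Z = (\<Prod>C\<in>{C \<in> Cyc (\<tau> \<circ> \<sigma>) S. C \<subseteq> psupp \<tau>}. cyc_tr (\<tau> \<circ> \<sigma>) Z C)"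

text \<open>The (sigma,tau)-reduction of Z (meaningful on S minus supp(tau)).\<close>
definition reduction :: "nat set \<Rightarrow> (nat \<Rightarrow> nat) \<Rightarrow> (nat \<Rightarrow> nat) \<Rightarrow> (nat \<Rightarrow> complex^'n^'n)
    \<Rightarrow> nat \<Rightarrow> complex^'n^'n" where
  "reduction S \<sigma> \<tau> Z j =
     (if j = Min (S - psupp \<tau>) then mat (lam S \<sigma> \<tau> Z) else mat 1) **
     mprod_list (map (\<lambda>i. Z (((\<tau> \<circ> \<sigma>) ^^ i) j)) [0..<ret \<sigma> \<tau> j])"

end

theory Submission
  imports Defs "HOL-Combinatorics.Cycles"
begin


definition ow :: "(nat \<Rightarrow> nat) \<Rightarrow> nat \<Rightarrow> nat \<Rightarrow> nat list" where
  "ow q x n = map (\<lambda>i. (q ^^ i) x) [0..<n]"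

lemma ow_Suc: "ow q x (Suc n) = ow q x n @ [(q ^^ n) x]"
  by (simp add: ow_def)

lemma ow_add: "ow q x (a + b) = ow q x a @ ow q ((q ^^ a) x) b"
  by (induction b) (simp_all add: ow_Suc ow_def, metis add.commute comp_apply funpow_add)

lemma ow_len[simp]: "length (ow q x n) = n" by (simp add: ow_def)

lemma mprod_list_append:
  "mprod_list (xs @ ys) = mprod_list xs ** mprod_list ys"
  by (induction xs) (simp_all add: mprod_list_def matrix_mul_lid matrix_mul_assoc)

lemma mprod_list_Cons: "mprod_list (x # xs) = x ** mprod_list xs"
  by (simp add: mprod_list_def)

lemma mprod_list_Nil: "mprod_list [] = mat 1"
  by (simp add: mprod_list_def)

lemma trace_rotate1: "trace (mprod_list (rotate1 xs)) = trace (mprod_list (xs :: ('a::comm_ring_1^'n^'n) list))"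
proof (cases xs)
  case Nil then show ?thesis by simp
next
  case (Cons a l)
  then show ?thesis
  proof -
    have "trace (mprod_list (rotate1 xs)) = trace (mprod_list l ** a)"
      using Cons by (simp add: mprod_list_append mprod_list_Cons mprod_list_Nil matrix_mul_rid)
    also have "\<dots> = trace (a ** mprod_list l)" by (rule trace_mul_sym)
    finally show ?thesis using Cons by (simp add: mprod_list_Cons)
  qed
qed

lemma trace_rotate: "trace (mprod_list (rotate k xs)) = trace (mprod_list (xs :: ('a::comm_ring_1^'n^'n) list))"
  by (induction k) (simp_all add: trace_rotate1)

lemma mat_mul_left: "(mat c ** A) $ i $ j = c * (A $ i $ j :: 'a::comm_ring_1)"
  by (simp add: matrix_matrix_mult_def mat_def if_distrib[where f="\<lambda>u. u * _"] sum.delta cong: if_cong)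

lemma mat_mul_right: "(A ** mat c) $ i $ j = (A $ i $ j :: 'a::comm_ring_1) * c"
  by (simp add: matrix_matrix_mult_def mat_def if_distrib[where f="\<lambda>u. _ * u"] sum.delta' cong: if_cong)

lemma mat_comm: "(A :: 'a::comm_ring_1^'n^'n) ** mat c = mat c ** A"
  by (simp add: vec_eq_iff mat_mul_left mat_mul_right mult.commute)

lemma mat_mul_mat: "mat a ** mat b = (mat (a * b) :: 'a::comm_ring_1^'n^'n)"
  by (simp add: vec_eq_iff mat_mul_left) (simp add: mat_def)

lemma mprod_scalar:
  "mprod_list (map (\<lambda>x. mat (c x) ** (W x :: 'a::comm_ring_1^'n^'n)) xs)
     = mat (prod_list (map c xs)) ** mprod_list (map W xs)"
proof (induction xs)
  case Nil then show ?case by (simp add: mprod_list_Nil matrix_mul_lid)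
next
  case (Cons a xs)
  have "mat (c a) ** W a ** (mat (prod_list (map c xs)) ** mprod_list (map W xs))
      = mat (c a) ** (W a ** mat (prod_list (map c xs))) ** mprod_list (map W xs)"
    by (simp add: matrix_mul_assoc)
  also have "\<dots> = mat (c a) ** mat (prod_list (map c xs)) ** W a ** mprod_list (map W xs)"
    by (simp only: mat_comm[of "W a"] matrix_mul_assoc)
  also have "\<dots> = mat (c a * prod_list (map c xs)) ** (W a ** mprod_list (map W xs))"
    by (simp only: mat_mul_mat matrix_mul_assoc)
  finally show ?case using Cons
    by (simp add: mprod_list_Cons matrix_mul_assoc)
qed

lemma trN_scalar: "trN (mat a ** M) = a * trN M"
  by (simp add: trN_def trace_def mat_mul_left sum_distrib_left)

lemma cyc_of_funpow: "z \<in> cyc_of q x \<Longrightarrow> (q ^^ i) z \<in> cyc_of q x"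
  unfolding cyc_of_def by (auto, metis comp_apply funpow_add)

lemma self_in_cyc: "x \<in> cyc_of q x"
  unfolding cyc_of_def by (auto intro: exI[of _ 0])

lemma card_lemma:
  assumes "n > 0" "(q ^^ n) x = x" "inj_on (\<lambda>i. (q ^^ i) x) {..<n}"
  shows "cyc_of q x = (\<lambda>i. (q ^^ i) x) ` {..<n}" "card (cyc_of q x) = n"
proof -
  show 1: "cyc_of q x = (\<lambda>i. (q ^^ i) x) ` {..<n}"
  proof
    show "cyc_of q x \<subseteq> (\<lambda>i. (q ^^ i) x) ` {..<n}"
    proof
      fix z assume "z \<in> cyc_of q x"
      then obtain i where "z = (q ^^ i) x" by (auto simp: cyc_of_def)
      then have "z = (q ^^ (i mod n)) x" using funpow_mod_eq[where f=q and n=n and x=x and m=i] assms by simp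
      then show "z \<in> (\<lambda>i. (q ^^ i) x) ` {..<n}" using assms(1) by auto
    qed
  qed (auto simp: cyc_of_def)
  show "card (cyc_of q x) = n" using 1 card_image[OF assms(3)] by simp
qed

lemma inj_period:
  assumes "inj q" "\<forall>i. 0 < i \<and> i < n \<longrightarrow> (q ^^ i) x \<noteq> x"
  shows "inj_on (\<lambda>i. (q ^^ i) x) {..<n}"
proof (rule inj_onI)
  have key: "a < b \<Longrightarrow> b < n \<Longrightarrow> (q ^^ a) x \<noteq> (q ^^ b) x" for a b
  proof
    assume "a < b" "b < n" "(q ^^ a) x = (q ^^ b) x"
    then have "(q ^^ a) x = (q ^^ a) ((q ^^ (b - a)) x)"
      by (metis funpow_add le_add_diff_inverse less_imp_le o_apply)
    then have "(q ^^ (b - a)) x = x" using inj_fn[OF assms(1), of a] by (metis injD)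
    then show False using assms(2) \<open>a < b\<close> \<open>b < n\<close> by auto
  qed
  fix a b assume "a \<in> {..<n}" "b \<in> {..<n}" "(q ^^ a) x = (q ^^ b) x"
  then show "a = b" using key by (metis lessThan_iff linorder_neqE_nat)
qed

lemma min_period:
  assumes "(q ^^ N) x = x" "N > 0"
  obtains n where "n > 0" "(q ^^ n) x = x" "\<forall>i. 0 < i \<and> i < n \<longrightarrow> (q ^^ i) x \<noteq> x"
proof -
  define n where "n = (LEAST n. n > 0 \<and> (q ^^ n) x = x)"
  have "n > 0 \<and> (q ^^ n) x = x" unfolding n_def by (rule LeastI[of _ N]) (use assms in auto)
  moreover have "\<forall>i. 0 < i \<and> i < n \<longrightarrow> (q ^^ i) x \<noteq> x"
    unfolding n_def using not_less_Least by blast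
  ultimately show ?thesis using that by blast
qed

lemma rotation:
  assumes "n > 0" "(q ^^ n) y = y" "k < n"
  shows "ow q ((q ^^ k) y) n = rotate k (ow q y n)"
proof (rule nth_equalityI)
  fix i assume "i < length (ow q ((q ^^ k) y) n)"
  then have i: "i < n" by simp
  have "rotate k (ow q y n) ! i = ow q y n ! ((k + i) mod n)"
    using i by (simp add: nth_rotate)
  also have "\<dots> = (q ^^ ((k + i) mod n)) y" using assms(1) by (simp add: ow_def)
  also have "\<dots> = (q ^^ (i + k)) y" using funpow_mod_eq[where f=q and n=n and x=y] assms(2) by (simp add: add.commute)
  finally show "ow q ((q ^^ k) y) n ! i = rotate k (ow q y n) ! i"
    using i by (simp add: ow_def funpow_add)
qed simp

lemma cyc_tr_from:
  assumes "n > 0" "(q ^^ n) y = y" "inj_on (\<lambda>i. (q ^^ i) y) {..<n}"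
  shows "cyc_tr q Z (cyc_of q y) = trN (mprod_list (map Z (ow q y n)))"
proof -
  let ?C = "cyc_of q y"
  note cl = card_lemma[OF assms]
  have "finite ?C" "?C \<noteq> {}" using cl(1) assms(1) by auto
  then have "Min ?C \<in> ?C" by simp
  then obtain k where k: "k < n" "Min ?C = (q ^^ k) y" using cl(1) by auto
  have "cyc_word q ?C = ow q (Min ?C) n" using cl(2) by (simp add: cyc_word_def ow_def)
  also have "\<dots> = rotate k (ow q y n)" using k rotation[OF assms(1,2) k(1)] by simp
  finally show ?thesis
    by (simp add: cyc_tr_def trN_def rotate_map[symmetric] trace_rotate)
qed

lemma same_cyc:
  assumes "n > 0" "(q ^^ n) y = y" "z \<in> cyc_of q y"
  shows "cyc_of q z = cyc_of q y"
proof -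
  obtain a where a: "z = (q ^^ a) y" using assms(3) by (auto simp: cyc_of_def)
  have "cyc_of q z \<subseteq> cyc_of q y" using cyc_of_funpow[OF assms(3)] by (auto simp: cyc_of_def)
  moreover have "cyc_of q y \<subseteq> cyc_of q z"
  proof
    fix w assume "w \<in> cyc_of q y"
    then obtain i where i: "w = (q ^^ i) y" by (auto simp: cyc_of_def)
    have e: "i + n * a - a + a = i + n * a" using assms(1)
    proof -
      have "a \<le> n * a" using assms(1) by simp
      then show ?thesis by arith
    qed
    have "(q ^^ (i + n * a - a)) z = (q ^^ (i + n * a - a + a)) y" by (simp add: a funpow_add)
    also have "\<dots> = (q ^^ (i + n * a)) y" using e by simp
    also have "\<dots> = (q ^^ ((i + n * a) mod n)) y"
      using funpow_mod_eq[where f=q and n=n and x=y and m="i + n * a"] assms(2) by simp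
    also have "(i + n * a) mod n = i mod n" by simp
    also have "(q ^^ (i mod n)) y = w" using funpow_mod_eq[where f=q and n=n and x=y and m=i] assms(2) i by simp
    finally show "w \<in> cyc_of q z" by (auto simp: cyc_of_def)
  qed
  ultimately show ?thesis by blast
qed



lemma funpow_in_perm: "q permutes A \<Longrightarrow> x \<in> A \<Longrightarrow> (q ^^ i) x \<in> A"
  by (induction i) (auto simp: permutes_in_image)

lemma perm_period: "q permutes A \<Longrightarrow> finite A \<Longrightarrow> \<exists>N>0. (q ^^ N) x = x"
  by (metis permutation_is_nilpotent permutation_permutes id_apply)

locale red =
  fixes S :: "nat set" and \<sigma> \<tau> \<pi>' :: "nat \<Rightarrow> nat"
  assumes fin: "finite S" and sig: "\<sigma> permutes S" and tau: "\<tau> permutes S"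
    and pip: "\<pi>' permutes (S - psupp \<tau>)"
begin

definition "S' = S - psupp \<tau>"
definition "t = \<tau> \<circ> \<sigma>"
definition "p = \<tau> \<circ> \<pi>' \<circ> \<sigma>"
definition "\<rho> = \<pi>' \<circ> pominus \<sigma> \<tau>"

lemma L1: "x \<notin> psupp \<tau> \<Longrightarrow> \<tau> x = x" by (simp add: psupp_def)

lemma L2: "\<tau> y \<in> psupp \<tau> \<longleftrightarrow> y \<in> psupp \<tau>"
  using permutes_inj[OF tau] by (auto simp: psupp_def inj_eq)

lemma L3: "y \<notin> psupp \<tau> \<Longrightarrow> \<pi>' y \<notin> psupp \<tau>"
proof -
  assume y: "y \<notin> psupp \<tau>"
  show ?thesis
  proof (cases "y \<in> S - psupp \<tau>")
    case True then show ?thesis using permutes_in_image[OF pip] by auto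
  next
    case False then show ?thesis using permutes_not_in[OF pip] y by auto
  qed
qed

lemma L4: "\<sigma> y \<in> psupp \<tau> \<Longrightarrow> p y = t y"
  using permutes_not_in[OF pip, of "\<sigma> y"] by (simp add: p_def t_def)

lemma L5: "p y \<in> psupp \<tau> \<Longrightarrow> \<sigma> y \<in> psupp \<tau>"
  using L3[of "\<sigma> y"] L1[of "\<pi>' (\<sigma> y)"] unfolding p_def by (metis comp_apply)

lemma L5': "t y \<in> psupp \<tau> \<Longrightarrow> \<sigma> y \<in> psupp \<tau>"
  using L2 by (simp add: t_def)

lemma L6: "\<sigma> y \<notin> psupp \<tau> \<Longrightarrow> p y = \<pi>' (t y)"
  using L3[of "\<sigma> y"] L1[of "\<pi>' (\<sigma> y)"] L1[of "\<sigma> y"] by (simp add: p_def t_def)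

lemma pip_S: "\<pi>' permutes S"
  using pip by (rule permutes_subset) auto

lemma p_perm: "p permutes S"
  unfolding p_def using permutes_compose[OF sig permutes_compose[OF pip_S tau]]
  by (simp add: o_assoc)

lemma t_perm: "t permutes S"
  unfolding t_def using permutes_compose[OF sig tau] .

lemma psupp_S: "psupp \<tau> \<subseteq> S"
  using permutes_not_in[OF tau] by (auto simp: psupp_def)

lemma ret_ex: assumes "j \<in> S'"
  shows "1 \<le> ret \<sigma> \<tau> j \<and> (t ^^ ret \<sigma> \<tau> j) j \<notin> psupp \<tau>"
proof -
  have jS: "j \<in> S" "j \<notin> psupp \<tau>" using assms by (auto simp: S'_def)
  obtain N where N: "N > 0" "(t ^^ N) j = j" using perm_period[OF t_perm fin] by blast
  show ?thesis unfolding ret_def t_def[symmetric]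
    by (rule LeastI[of _ N]) (use N jS in auto)
qed

lemma ret_min: assumes "1 \<le> i" "i < ret \<sigma> \<tau> j" shows "(t ^^ i) j \<in> psupp \<tau>"
  using not_less_Least[OF assms(2)[unfolded ret_def]] assms(1) by (auto simp: t_def)

lemma R3: "i < ret \<sigma> \<tau> j \<Longrightarrow> (p ^^ i) j = (t ^^ i) j"
proof (induction i)
  case 0 then show ?case by simp
next
  case (Suc i)
  have "(t ^^ Suc i) j \<in> psupp \<tau>" using ret_min[of "Suc i" j] Suc.prems by simp
  then have "\<sigma> ((t ^^ i) j) \<in> psupp \<tau>" using L5' by simp
  then show ?case using Suc L4 by simp
qed

lemma R4: assumes "j \<in> S'" shows "(p ^^ ret \<sigma> \<tau> j) j = \<rho> j"
proof -
  define k where "k = ret \<sigma> \<tau> j - 1"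
  have k: "ret \<sigma> \<tau> j = Suc k" using ret_ex[OF assms] unfolding k_def by simp
  have jn: "j \<notin> psupp \<tau>" using assms by (simp add: S'_def)
  have "(t ^^ Suc k) j \<notin> psupp \<tau>" using ret_ex[OF assms] k by simp
  then have "\<sigma> ((t ^^ k) j) \<notin> psupp \<tau>" using L2 by (auto simp: t_def)
  then have "p ((t ^^ k) j) = \<pi>' (t ((t ^^ k) j))" by (rule L6)
  moreover have "(p ^^ k) j = (t ^^ k) j" using R3[of k j] k by simp
  ultimately show ?thesis using k jn by (simp add: \<rho>_def pominus_def t_def)
qed

lemma R5: "0 < i \<Longrightarrow> i < ret \<sigma> \<tau> j \<Longrightarrow> (p ^^ i) j \<notin> S'"
  using R3 ret_min[of i j] by (simp add: S'_def)

lemma R6: assumes "j \<in> S'" shows "\<rho> j \<in> S'"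
proof -
  have jS: "j \<in> S" "j \<notin> psupp \<tau>" using assms by (auto simp: S'_def)
  have "(t ^^ ret \<sigma> \<tau> j) j \<in> S'" using ret_ex[OF assms] funpow_in_perm[OF t_perm jS(1)]
    by (simp add: S'_def)
  then show ?thesis using permutes_in_image[OF pip] jS
    by (simp add: \<rho>_def pominus_def S'_def t_def)
qed

lemma R7: "j \<in> S' \<Longrightarrow> (\<rho> ^^ k) j \<in> S'"
  by (induction k) (simp_all add: R6)


definition T :: "nat \<Rightarrow> nat \<Rightarrow> nat" where
  "T j k = (\<Sum>i<k. ret \<sigma> \<tau> ((\<rho> ^^ i) j))"

definition W :: "(nat \<Rightarrow> complex^'n^'n) \<Rightarrow> nat \<Rightarrow> complex^'n^'n" where
  "W Z y = mprod_list (map Z (ow p y (ret \<sigma> \<tau> y)))"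

lemma T_0[simp]: "T j 0 = 0" by (simp add: T_def)
lemma T_Suc: "T j (Suc k) = T j k + ret \<sigma> \<tau> ((\<rho> ^^ k) j)" by (simp add: T_def)

lemma P1: "j \<in> S' \<Longrightarrow> (p ^^ T j k) j = (\<rho> ^^ k) j"
proof (induction k)
  case 0 then show ?case by simp
next
  case (Suc k)
  have "(p ^^ T j (Suc k)) j = (p ^^ ret \<sigma> \<tau> ((\<rho> ^^ k) j)) ((p ^^ T j k) j)"
    by (simp only: T_Suc add.commute[of "T j k"] funpow_add comp_apply)
  also have "\<dots> = \<rho> ((\<rho> ^^ k) j)" using Suc R4[OF R7[OF Suc.prems, of k]] by simp
  finally show ?case by simp
qed

lemma P2: "j \<in> S' \<Longrightarrow> mprod_list (map Z (ow p j (T j k))) = mprod_list (map (W Z) (ow \<rho> j k))"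
proof (induction k)
  case 0 then show ?case by (simp add: ow_def)
next
  case (Suc k)
  have "ow p j (T j (Suc k)) = ow p j (T j k) @ ow p ((\<rho> ^^ k) j) (ret \<sigma> \<tau> ((\<rho> ^^ k) j))"
    using P1[OF Suc.prems, of k] by (simp add: T_Suc ow_add)
  then show ?case using Suc
    by (simp add: ow_Suc mprod_list_append W_def mprod_list_Cons mprod_list_Nil matrix_mul_rid)
qed

lemma T_mono: assumes "j \<in> S'" shows "strict_mono (T j)"
proof (rule strict_monoI_Suc)
  fix k show "T j k < T j (Suc k)" using ret_ex[OF R7[OF assms, of k]] by (simp add: T_Suc)
qed

lemma P4: assumes "j \<in> S'" "T j a < i" "i < T j (Suc a)" shows "(p ^^ i) j \<notin> S'"
proof -
  have "(p ^^ i) j = (p ^^ (i - T j a)) ((p ^^ T j a) j)"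
    using assms(2) by (simp add: funpow_add[symmetric, THEN fun_cong, simplified])
  also have "\<dots> = (p ^^ (i - T j a)) ((\<rho> ^^ a) j)" using P1[OF assms(1)] by simp
  finally show ?thesis using R5[of "i - T j a" "(\<rho> ^^ a) j"] assms(2,3) by (simp add: T_Suc)
qed

lemma T_bracket: assumes "j \<in> S'" shows "\<exists>a. T j a \<le> i \<and> i < T j (Suc a)"
proof -
  have ex: "\<exists>a. i < T j (Suc a)"
    using strict_mono_imp_increasing[OF T_mono[OF assms], of "Suc i"] by (intro exI[of _ i]) simp
  define a where "a = (LEAST a. i < T j (Suc a))"
  have 1: "i < T j (Suc a)" unfolding a_def using LeastI_ex[OF ex] .
  have 2: "T j a \<le> i"
  proof (cases a)
    case 0 then show ?thesis by simp
  next
    case (Suc b)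
    then have "\<not> i < T j (Suc b)" using not_less_Least[of b "\<lambda>a. i < T j (Suc a)"] a_def by simp
    then show ?thesis using Suc by simp
  qed
  show ?thesis using 1 2 by blast
qed

lemma P5: assumes "j \<in> S'" "(p ^^ i) j \<in> S'" shows "\<exists>a. i = T j a"
proof -
  obtain a where "T j a \<le> i" "i < T j (Suc a)" using T_bracket[OF assms(1)] by blast
  then show ?thesis using P4[OF assms(1), of a i] assms(2) by (metis le_neq_implies_less)
qed


lemma red_form: "reduction S \<sigma> \<tau> Z y = mat (if y = Min S' then lam S \<sigma> \<tau> Z else 1) ** W Z y"
proof -
  have "map (\<lambda>i. Z (((\<tau> \<circ> \<sigma>) ^^ i) y)) [0..<ret \<sigma> \<tau> y] = map Z (ow p y (ret \<sigma> \<tau> y))"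
    unfolding ow_def by (simp add: R3 t_def)
  then show ?thesis unfolding reduction_def W_def S'_def by (simp add: if_distrib[of mat])
qed

lemma finS': "finite S'" using fin by (simp add: S'_def)

lemma cycle_main:
  assumes j: "j \<in> S'"
  shows "cyc_of \<rho> j = cyc_of p j \<inter> S'"
    "cyc_tr \<rho> (reduction S \<sigma> \<tau> Z) (cyc_of \<rho> j)
       = (if Min S' \<in> cyc_of p j then lam S \<sigma> \<tau> Z else 1) * cyc_tr p Z (cyc_of p j)"
proof -
  obtain N where N: "N > 0" "(p ^^ N) j = j" using perm_period[OF p_perm fin] by blast
  obtain n where n: "n > 0" "(p ^^ n) j = j" "\<forall>i. 0 < i \<and> i < n \<longrightarrow> (p ^^ i) j \<noteq> j"
    using min_period[OF N(2,1)] by blast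
  have injp: "inj_on (\<lambda>i. (p ^^ i) j) {..<n}"
    using inj_period[OF permutes_inj[OF p_perm] n(3)] .
  note clp = card_lemma[OF n(1,2) injp]
  note sm = T_mono[OF j]
  obtain m where m: "T j m \<le> n" "n < T j (Suc m)" using T_bracket[OF j] by blast
  have Tm: "T j m = n"
  proof (rule ccontr)
    assume "T j m \<noteq> n"
    then have "T j m < n" using m by simp
    then show False using P4[OF j _ m(2)] n(2) j by simp
  qed
  have m0: "m > 0" using Tm n(1) by (cases m) auto
  have rm: "(\<rho> ^^ m) j = j" using P1[OF j, of m] Tm n(2) by simp
  have Tlt: "k < m \<Longrightarrow> T j k < n" for k using strict_mono_less[OF sm] Tm by metis
  have injr: "inj_on (\<lambda>k. (\<rho> ^^ k) j) {..<m}"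
  proof (rule inj_onI)
    fix a b assume a: "a \<in> {..<m}" and b: "b \<in> {..<m}" and e: "(\<rho> ^^ a) j = (\<rho> ^^ b) j"
    then have "(p ^^ T j a) j = (p ^^ T j b) j" using P1[OF j] by simp
    then have "T j a = T j b" using injp Tlt a b by (auto dest: inj_onD)
    then show "a = b" using strict_mono_eq[OF sm] by simp
  qed
  note clr = card_lemma[OF m0 rm injr]
  show A: "cyc_of \<rho> j = cyc_of p j \<inter> S'"
  proof
    show "cyc_of \<rho> j \<subseteq> cyc_of p j \<inter> S'"
    proof
      fix x assume "x \<in> cyc_of \<rho> j"
      then obtain k where k: "k < m" "x = (\<rho> ^^ k) j" using clr(1) by auto
      then have "x = (p ^^ T j k) j" using P1[OF j] by simp
      then have "x \<in> cyc_of p j" using clp(1) Tlt[OF k(1)] by auto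
      then show "x \<in> cyc_of p j \<inter> S'" using R7[OF j] k by simp
    qed
    show "cyc_of p j \<inter> S' \<subseteq> cyc_of \<rho> j"
    proof
      fix x assume x: "x \<in> cyc_of p j \<inter> S'"
      then obtain i where i: "i < n" "x = (p ^^ i) j" using clp(1) by auto
      then obtain a where a: "i = T j a" using P5[OF j] x by blast
      have "a < m"
      proof (rule ccontr)
        assume "\<not> a < m"
        then have "T j m \<le> T j a" using strict_mono_less_eq[OF sm] by simp
        then show False using Tm a i by simp
      qed
      then show "x \<in> cyc_of \<rho> j" using clr(1) P1[OF j] a i by auto
    qed
  qed
  define c where "c = (\<lambda>y. if y = Min S' then lam S \<sigma> \<tau> Z else 1)"
  have "cyc_tr \<rho> (reduction S \<sigma> \<tau> Z) (cyc_of \<rho> j)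
      = trN (mprod_list (map (reduction S \<sigma> \<tau> Z) (ow \<rho> j m)))"
    by (rule cyc_tr_from[OF m0 rm injr])
  also have "map (reduction S \<sigma> \<tau> Z) (ow \<rho> j m) = map (\<lambda>x. mat (c x) ** W Z x) (ow \<rho> j m)"
    by (simp add: red_form c_def)
  also have "mprod_list \<dots> = mat (prod_list (map c (ow \<rho> j m))) ** mprod_list (map (W Z) (ow \<rho> j m))"
    by (rule mprod_scalar)
  also have "mprod_list (map (W Z) (ow \<rho> j m)) = mprod_list (map Z (ow p j n))"
    using P2[OF j, of Z m] Tm by simp
  also have "trN (mat (prod_list (map c (ow \<rho> j m))) ** mprod_list (map Z (ow p j n)))
      = prod_list (map c (ow \<rho> j m)) * cyc_tr p Z (cyc_of p j)"
    by (simp add: trN_scalar cyc_tr_from[OF n(1,2) injp])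
  also have "prod_list (map c (ow \<rho> j m)) = prod c (set (ow \<rho> j m))"
  proof -
    have "distinct (ow \<rho> j m)" unfolding ow_def distinct_map using injr
      by (simp add: lessThan_atLeast0)
    then show ?thesis by (simp add: prod.distinct_set_conv_list)
  qed
  also have "set (ow \<rho> j m) = cyc_of \<rho> j" using clr(1) by (simp add: ow_def lessThan_atLeast0)
  also have "prod c (cyc_of \<rho> j) = (if Min S' \<in> cyc_of \<rho> j then lam S \<sigma> \<tau> Z else 1)"
    unfolding c_def using clr(1) by (simp add: prod.delta)
  also have "(Min S' \<in> cyc_of \<rho> j) = (Min S' \<in> cyc_of p j)"
  proof -
    have "Min S' \<in> S'" using finS' j by (intro Min_in) auto
    then show ?thesis using A by auto
  qed
  finally show "cyc_tr \<rho> (reduction S \<sigma> \<tau> Z) (cyc_of \<rho> j)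
       = (if Min S' \<in> cyc_of p j then lam S \<sigma> \<tau> Z else 1) * cyc_tr p Z (cyc_of p j)" .
qed


lemma agree: "\<forall>i. (t ^^ i) x \<in> psupp \<tau> \<Longrightarrow> (p ^^ i) x = (t ^^ i) x"
proof (induction i)
  case 0 then show ?case by simp
next
  case (Suc i)
  have "t ((t ^^ i) x) \<in> psupp \<tau>" using Suc.prems[rule_format, of "Suc i"] by simp
  then have "\<sigma> ((t ^^ i) x) \<in> psupp \<tau>" by (rule L5')
  then show ?case using Suc L4 by simp
qed

lemma agree2: "\<forall>i. (p ^^ i) x \<in> psupp \<tau> \<Longrightarrow> (p ^^ i) x = (t ^^ i) x"
proof (induction i)
  case 0 then show ?case by simp
next
  case (Suc i)
  have "p ((p ^^ i) x) \<in> psupp \<tau>" using Suc.prems[rule_format, of "Suc i"] by simp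
  then have "\<sigma> ((p ^^ i) x) \<in> psupp \<tau>" by (rule L5)
  then show ?case using Suc L4 by simp
qed

lemma cyc_sub: "q permutes S \<Longrightarrow> x \<in> S \<Longrightarrow> cyc_of q x \<subseteq> S"
  unfolding cyc_of_def by (auto intro: funpow_in_perm)

lemma samep: "z \<in> cyc_of p y \<Longrightarrow> cyc_of p z = cyc_of p y"
  using perm_period[OF p_perm fin, of y] same_cyc by blast

definition "A = cyc_of p ` S'"
definition "B = {C \<in> Cyc t S. C \<subseteq> psupp \<tau>}"

lemma S'_sub: "S' \<subseteq> S" by (auto simp: S'_def)

lemma G1: "Cyc p S = A \<union> B"
proof
  show "Cyc p S \<subseteq> A \<union> B"
  proof
    fix C assume "C \<in> Cyc p S"
    then obtain x where x: "x \<in> S" "C = cyc_of p x" by (auto simp: Cyc_def)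
    show "C \<in> A \<union> B"
    proof (cases "C \<inter> S' = {}")
      case False
      then obtain j where "j \<in> C" "j \<in> S'" by blast
      then show ?thesis using samep[of j x] x by (auto simp: A_def)
    next
      case True
      have "C \<subseteq> psupp \<tau>" using True cyc_sub[OF p_perm x(1)] x by (auto simp: S'_def)
      then have "\<forall>i. (p ^^ i) x \<in> psupp \<tau>" using x by (auto simp: cyc_of_def)
      then have eq: "\<And>i. (p ^^ i) x = (t ^^ i) x" using agree2 by blast
      have "C = cyc_of t x" using x by (simp add: cyc_of_def eq)
      then show ?thesis using x \<open>C \<subseteq> psupp \<tau>\<close> by (auto simp: B_def Cyc_def)
    qed
  qed
  show "A \<union> B \<subseteq> Cyc p S"
  proof
    fix C assume "C \<in> A \<union> B"
    then show "C \<in> Cyc p S"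
    proof
      assume "C \<in> A" then show ?thesis using S'_sub by (auto simp: A_def Cyc_def)
    next
      assume "C \<in> B"
      then obtain x where x: "x \<in> S" "C = cyc_of t x" "C \<subseteq> psupp \<tau>" by (auto simp: B_def Cyc_def)
      then have "\<forall>i. (t ^^ i) x \<in> psupp \<tau>" by (auto simp: cyc_of_def)
      then have eq: "\<And>i. (p ^^ i) x = (t ^^ i) x" using agree by blast
      have "C = cyc_of p x" using x by (simp add: cyc_of_def eq)
      then show ?thesis using x by (auto simp: Cyc_def)
    qed
  qed
qed

lemma G1d: "A \<inter> B = {}"
proof -
  have "C \<notin> B" if a: "C \<in> A" for C
  proof -
    obtain j where "j \<in> S'" "C = cyc_of p j" using a unfolding A_def by blast
    then have "j \<in> C" "j \<notin> psupp \<tau>" using self_in_cyc by (auto simp: S'_def)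
    then show ?thesis by (auto simp: B_def)
  qed
  then show ?thesis by blast
qed

lemma G2: "C \<in> B \<Longrightarrow> cyc_tr p Z C = cyc_tr t Z C"
proof -
  assume "C \<in> B"
  then obtain x where x: "x \<in> S" "C = cyc_of t x" "C \<subseteq> psupp \<tau>" by (auto simp: B_def Cyc_def)
  have ag: "(p ^^ i) z = (t ^^ i) z" if "z \<in> C" for z i
    using agree[of z i] cyc_of_funpow[of z t x] that x by blast
  have fC: "finite C" using cyc_sub[OF t_perm x(1)] fin x by (auto intro: finite_subset)
  have "C \<noteq> {}" using x(2) self_in_cyc[of x t] by blast
  then have "Min C \<in> C" using fC by simp
  then have "cyc_word p C = cyc_word t C" unfolding cyc_word_def using ag by simp
  then show ?thesis by (simp add: cyc_tr_def)
qed

lemma finA: "finite A" using finS' by (simp add: A_def)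
lemma finB: "finite B" using fin by (simp add: B_def Cyc_def)

lemma main: assumes ne: "S' \<noteq> {}"
  shows "cyc_trace_prod p S Z = cyc_trace_prod \<rho> S' (reduction S \<sigma> \<tau> Z)"
proof -
  have "cyc_trace_prod p S Z = prod (cyc_tr p Z) A * prod (cyc_tr p Z) B"
    unfolding cyc_trace_prod_def G1 using prod.union_disjoint[OF finA finB G1d] by simp
  also have "prod (cyc_tr p Z) B = prod (cyc_tr t Z) B" using G2 by (rule prod.cong[OF refl])
  also have "\<dots> = lam S \<sigma> \<tau> Z" by (simp add: lam_def B_def t_def)
  finally have L: "cyc_trace_prod p S Z = prod (cyc_tr p Z) A * lam S \<sigma> \<tau> Z" .
  have img: "Cyc \<rho> S' = (\<lambda>C. C \<inter> S') ` A"
    unfolding Cyc_def A_def image_image using cycle_main(1) by (auto intro: image_cong)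
  have inj: "inj_on (\<lambda>C. C \<inter> S') A"
  proof (rule inj_onI)
    fix C1 C2 assume "C1 \<in> A" "C2 \<in> A" and e: "C1 \<inter> S' = C2 \<inter> S'"
    then obtain j1 j2 where j: "j1 \<in> S'" "C1 = cyc_of p j1" "j2 \<in> S'" "C2 = cyc_of p j2"
      by (auto simp: A_def)
    then have "j1 \<in> C2" using e self_in_cyc by blast
    then show "C1 = C2" using samep j by blast
  qed
  define C0 where "C0 = cyc_of p (Min S')"
  have mS: "Min S' \<in> S'" using finS' ne by simp
  have C0A: "C0 \<in> A" using mS by (simp add: C0_def A_def)
  have "cyc_trace_prod \<rho> S' (reduction S \<sigma> \<tau> Z)
      = prod (\<lambda>C. cyc_tr \<rho> (reduction S \<sigma> \<tau> Z) (C \<inter> S')) A"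
    unfolding cyc_trace_prod_def img prod.reindex[OF inj] by (simp add: o_def)
  also have "\<dots> = prod (\<lambda>C. (if C = C0 then lam S \<sigma> \<tau> Z else 1) * cyc_tr p Z C) A"
  proof (rule prod.cong[OF refl])
    fix C assume "C \<in> A"
    then obtain j where j: "j \<in> S'" "C = cyc_of p j" by (auto simp: A_def)
    have "(Min S' \<in> C) = (C = C0)" using samep[of "Min S'" j] j self_in_cyc
      unfolding C0_def by metis
    then show "cyc_tr \<rho> (reduction S \<sigma> \<tau> Z) (C \<inter> S') = (if C = C0 then lam S \<sigma> \<tau> Z else 1) * cyc_tr p Z C"
      using cycle_main(2)[OF j(1), of Z] cycle_main(1)[OF j(1)] j by simp
  qed
  also have "\<dots> = prod (\<lambda>C. if C = C0 then lam S \<sigma> \<tau> Z else 1) A * prod (cyc_tr p Z) A"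
    by (rule prod.distrib)
  also have "prod (\<lambda>C. if C = C0 then lam S \<sigma> \<tau> Z else 1) A = lam S \<sigma> \<tau> Z"
    using C0A finA by (simp add: prod.delta')
  finally show ?thesis using L by (simp add: mult.commute)
qed

lemma pi_eq: "(\<lambda>k. if k \<in> psupp \<tau> then \<tau> k else \<pi>' k) = \<tau> \<circ> \<pi>'"
proof
  fix k show "(if k \<in> psupp \<tau> then \<tau> k else \<pi>' k) = (\<tau> \<circ> \<pi>') k"
  proof (cases "k \<in> psupp \<tau>")
    case True then show ?thesis using permutes_not_in[OF pip, of k] by simp
  next
    case False then show ?thesis using L3[OF False] L1 by simp
  qed
qed

end

theorem lemma3p19:
  fixes S :: "nat set" and \<sigma> \<tau> \<pi>' :: "nat \<Rightarrow> nat" and Z :: "nat \<Rightarrow> complex^'n^'n"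
  assumes "finite S" and "\<sigma> permutes S" and "\<tau> permutes S"
    and "\<pi>' permutes (S - psupp \<tau>)"
  defines "\<pi> \<equiv> (\<lambda>k. if k \<in> psupp \<tau> then \<tau> k else \<pi>' k)"
  shows "(S - psupp \<tau> = {} \<longrightarrow>
            cyc_trace_prod (\<pi> \<circ> \<sigma>) S Z = cyc_trace_prod (\<tau> \<circ> \<sigma>) S Z \<and>
            cyc_trace_prod (\<tau> \<circ> \<sigma>) S Z = lam S \<sigma> \<tau> Z)
       \<and> (S - psupp \<tau> \<noteq> {} \<longrightarrow>
            cyc_trace_prod (\<pi> \<circ> \<sigma>) S Z =
            cyc_trace_prod (\<pi>' \<circ> pominus \<sigma> \<tau>) (S - psupp \<tau>) (reduction S \<sigma> \<tau> Z))"
proof -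
  interpret red S \<sigma> \<tau> \<pi>' using assms(1-4) by unfold_locales
  have pe: "\<pi> \<circ> \<sigma> = p" unfolding \<pi>_def pi_eq p_def by (simp add: o_assoc)
  show ?thesis
  proof (intro conjI impI)
    assume e: "S - psupp \<tau> = {}"
    have "\<pi>' = id" using assms(4) e by (simp add: permutes_empty)
    then have "p = \<tau> \<circ> \<sigma>" unfolding p_def by simp
    then show "cyc_trace_prod (\<pi> \<circ> \<sigma>) S Z = cyc_trace_prod (\<tau> \<circ> \<sigma>) S Z"
      using pe by simp
    have "psupp \<tau> = S" using e psupp_S by blast
    then have "{C \<in> Cyc (\<tau> \<circ> \<sigma>) S. C \<subseteq> psupp \<tau>} = Cyc (\<tau> \<circ> \<sigma>) S"
      using cyc_sub[OF t_perm] by (auto simp: Cyc_def t_def)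
    then show "cyc_trace_prod (\<tau> \<circ> \<sigma>) S Z = lam S \<sigma> \<tau> Z"
      by (simp add: lam_def cyc_trace_prod_def)
  next
    assume ne: "S - psupp \<tau> \<noteq> {}"
    show "cyc_trace_prod (\<pi> \<circ> \<sigma>) S Z =
            cyc_trace_prod (\<pi>' \<circ> pominus \<sigma> \<tau>) (S - psupp \<tau>) (reduction S \<sigma> \<tau> Z)"
      using main[of Z] ne pe by (simp add: S'_def \<rho>_def)
  qed
qed

end
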